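(* The twist polynomial of set systems satisfies the four-term relation: for every proper set system $D=(E,\mathcal{F})$ and every pair of distinct elements $a,b\in E$, $$\partial_{\omega_{D}}(z)+\partial_{\omega_{\widetilde{D'}_{ab}}}(z)-\partial_{\omega_{D'_{ab}}}(z)-\partial_{\omega_{\widetilde{D}_{ab}}}(z)=0.$$
   Context: A set system $D=(E,\mathcal{F})$ is a finite set $E$ together with a collection $\mathcal{F}$ of subsets of $E$ (feasible sets); proper means $\mathcal{F}\neq\emptyset$. $\triangle$ denotes symmetric difference. For $A\subseteq E$, the twist is $D*A=(E,\{A\triangle X: X\in\mathcal{F}\})$. The width $\omega(D)$ is the size of a largest feasible set minus the size of a smallest feasible set. The twist polynomial is $\partial_{\omega_D}(z)=\sum_{A\subseteq E} z^{\omega(D*A)}$. For distinct $a,b\in E$: handle sliding of $a$ over $b$ gives $\widetilde{D}_{ab}=(E,\mathcal{F}\triangle\{F\cup\{a\}\mid F\cup\{b\}\in\mathcal{F},\ F\subseteq E\setminus\{a,b\}\})$; exchanging handle ends of $a$ and $b$ gives $D'_{ab}=(E,\mathcal{F}\triangle\{F\cup\{a,b\}\mid F\in\mathcal{F},\ F\subseteq E\setminus\{a,b\}\})$; and $\widetilde{D'}_{ab}$ denotes the result of first exchanging handle ends of $a,b$ in $D$ and then sliding $a$ over $b$ in the resulting set system. *)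

theory Defs
  imports Main "HOL-Computational_Algebra.Polynomial"
begin

definition symdiff :: "'a set \<Rightarrow> 'a set \<Rightarrow> 'a set" (infixl "\<triangle>" 65) where
  "X \<triangle> Y = (X - Y) \<union> (Y - X)"

type_synonym 'a setsys = "'a set \<times> 'a set set"

definition set_system :: "'a setsys \<Rightarrow> bool" where
  "set_system D \<longleftrightarrow> finite (fst D) \<and> snd D \<subseteq> Pow (fst D)"

definition proper :: "'a setsys \<Rightarrow> bool" where
  "proper D \<longleftrightarrow> snd D \<noteq> {}"

definition twist :: "'a setsys \<Rightarrow> 'a set \<Rightarrow> 'a setsys" where
  "twist D A = (fst D, {A \<triangle> X | X. X \<in> snd D})"

definition width :: "'a setsys \<Rightarrow> nat" where
  "width D = Max (card ` snd D) - Min (card ` snd D)"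

definition twist_poly :: "'a setsys \<Rightarrow> int poly" where
  "twist_poly D = (\<Sum>A\<in>Pow (fst D). monom 1 (width (twist D A)))"

definition handle_slide :: "'a setsys \<Rightarrow> 'a \<Rightarrow> 'a \<Rightarrow> 'a setsys" where
  "handle_slide D a b = (fst D, snd D \<triangle>
     {F \<union> {a} | F. F \<union> {b} \<in> snd D \<and> F \<subseteq> fst D - {a, b}})"

definition handle_exchange :: "'a setsys \<Rightarrow> 'a \<Rightarrow> 'a \<Rightarrow> 'a setsys" where
  "handle_exchange D a b = (fst D, snd D \<triangle>
     {F \<union> {a, b} | F. F \<in> snd D \<and> F \<subseteq> fst D - {a, b}})"

end

theory Submission
  imports Defs
begin

lemma sd_ins: "x \<notin> G \<Longrightarrow> A \<triangle> (insert x G) = (if x \<in> A then (A \<triangle> G) - {x} else insert x (A \<triangle> G))"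
  by (auto simp: symdiff_def)

lemma sd_fin: "finite A \<Longrightarrow> finite G \<Longrightarrow> finite (A \<triangle> G)"
  by (simp add: symdiff_def)

lemma sd_mem: "x \<in> A \<triangle> G \<longleftrightarrow> (x \<in> A) \<noteq> (x \<in> G)"
  by (auto simp: symdiff_def)

lemma card_slide:
  assumes "finite A" "finite G" "a \<notin> G" "b \<notin> G" "a \<noteq> b" "(a \<in> A) = (b \<in> A)"
  shows "card (A \<triangle> (G \<union> {a})) = card (A \<triangle> (G \<union> {b}))"
proof -
  have f: "finite (A \<triangle> G)" using assms by (simp add: sd_fin)
  have e1: "G \<union> {a} = insert a G" "G \<union> {b} = insert b G" by auto
  show ?thesis
  proof (cases "a \<in> A")
    case True
    then show ?thesis using assms f unfolding e1
      by (simp add: sd_ins card_Diff_singleton sd_mem)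
  next
    case False
    then show ?thesis using assms f unfolding e1
      by (simp add: sd_ins sd_mem)
  qed
qed

lemma card_exch:
  assumes "finite A" "finite G" "a \<notin> G" "b \<notin> G" "a \<noteq> b" "(a \<in> A) \<noteq> (b \<in> A)"
  shows "card (A \<triangle> (G \<union> {a, b})) = card (A \<triangle> G)"
proof -
  have f: "finite (A \<triangle> G)" using assms by (simp add: sd_fin)
  have e1: "G \<union> {a, b} = insert a (insert b G)" by auto
  have f2: "finite (A \<triangle> insert b G)" using assms by (simp add: sd_fin)
  show ?thesis
  proof (cases "a \<in> A")
    case True
    then show ?thesis using assms f f2 unfolding e1
      by (simp add: sd_ins card_Diff_singleton sd_mem)
  next
    case False
    then have "b \<in> A \<triangle> G" using assms by (simp add: sd_mem)
    then have "card (A \<triangle> G) > 0" using f by (auto simp: card_gt_0_iff)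
    then show ?thesis using False assms f f2 unfolding e1
      by (simp add: sd_ins card_Diff_singleton sd_mem)
  qed
qed

lemma width_twist: "width (twist D A) = Max ((\<lambda>X. card (A \<triangle> X)) ` snd D) - Min ((\<lambda>X. card (A \<triangle> X)) ` snd D)"
proof -
  have "{A \<triangle> X | X. X \<in> snd D} = (\<lambda>X. A \<triangle> X) ` snd D" by auto
  then show ?thesis unfolding width_def twist_def by (simp add: image_image)
qed

lemma img_slide:
  assumes "finite (fst D)" "finite A" "a \<noteq> b" "(a \<in> A) = (b \<in> A)"
  shows "(\<lambda>X. card (A \<triangle> X)) ` snd (handle_slide D a b) = (\<lambda>X. card (A \<triangle> X)) ` snd D"
    (is "?c ` _ = ?c ` ?F")
proof -
  have cs: "?c (G \<union> {a}) = ?c (G \<union> {b})" if "G \<subseteq> fst D - {a, b}" for G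
    using card_slide[of A G a b] assms that finite_subset[of G "fst D"] by auto
  let ?Y = "{F \<union> {a} | F. F \<union> {b} \<in> ?F \<and> F \<subseteq> fst D - {a, b}}"
  have S: "snd (handle_slide D a b) = ?F \<triangle> ?Y" unfolding handle_slide_def by simp
  show ?thesis unfolding S
  proof
    show "?c ` (?F \<triangle> ?Y) \<subseteq> ?c ` ?F"
    proof
      fix n assume "n \<in> ?c ` (?F \<triangle> ?Y)"
      then obtain X where X: "X \<in> ?F \<triangle> ?Y" "n = ?c X" by auto
      show "n \<in> ?c ` ?F"
      proof (cases "X \<in> ?F")
        case True then show ?thesis using X by auto
      next
        case False
        then have "X \<in> ?Y" using X by (auto simp: symdiff_def)
        then obtain G where G: "X = G \<union> {a}" "G \<union> {b} \<in> ?F" "G \<subseteq> fst D - {a, b}" by auto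
        have "n = ?c (G \<union> {b})" using X(2) G(1) cs[OF G(3)] by simp
        then show ?thesis using G(2) by (rule image_eqI)
      qed
    qed
  next
    show "?c ` ?F \<subseteq> ?c ` (?F \<triangle> ?Y)"
    proof
      fix n assume "n \<in> ?c ` ?F"
      then obtain X where X: "X \<in> ?F" "n = ?c X" by auto
      show "n \<in> ?c ` (?F \<triangle> ?Y)"
      proof (cases "X \<in> ?Y")
        case False then show ?thesis using X by (auto simp: symdiff_def)
      next
        case True
        then obtain G where G: "X = G \<union> {a}" "G \<union> {b} \<in> ?F" "G \<subseteq> fst D - {a, b}" by auto
        have "G \<union> {b} \<notin> ?Y" using assms(3) G(3) by auto
        then have "G \<union> {b} \<in> ?F \<triangle> ?Y" using G by (auto simp: symdiff_def)
        moreover have "n = ?c (G \<union> {b})" using X(2) G(1) cs[OF G(3)] by simp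
        ultimately show ?thesis by (rule rev_image_eqI)
      qed
    qed
  qed
qed

lemma img_exch:
  assumes "finite (fst D)" "finite A" "a \<noteq> b" "(a \<in> A) \<noteq> (b \<in> A)"
  shows "(\<lambda>X. card (A \<triangle> X)) ` snd (handle_exchange D a b) = (\<lambda>X. card (A \<triangle> X)) ` snd D"
    (is "?c ` _ = ?c ` ?F")
proof -
  have cs: "?c (G \<union> {a, b}) = ?c G" if "G \<subseteq> fst D - {a, b}" for G
    using card_exch[of A G a b] assms that finite_subset[of G "fst D"] by auto
  let ?Y = "{F \<union> {a, b} | F. F \<in> ?F \<and> F \<subseteq> fst D - {a, b}}"
  have S: "snd (handle_exchange D a b) = ?F \<triangle> ?Y" unfolding handle_exchange_def by simp
  show ?thesis unfolding S
  proof
    show "?c ` (?F \<triangle> ?Y) \<subseteq> ?c ` ?F"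
    proof
      fix n assume "n \<in> ?c ` (?F \<triangle> ?Y)"
      then obtain X where X: "X \<in> ?F \<triangle> ?Y" "n = ?c X" by auto
      show "n \<in> ?c ` ?F"
      proof (cases "X \<in> ?F")
        case True then show ?thesis using X by auto
      next
        case False
        then have "X \<in> ?Y" using X by (auto simp: symdiff_def)
        then obtain G where G: "X = G \<union> {a, b}" "G \<in> ?F" "G \<subseteq> fst D - {a, b}" by auto
        have "n = ?c G" using X(2) G(1) cs[OF G(3)] by simp
        then show ?thesis using G(2) by (rule image_eqI)
      qed
    qed
  next
    show "?c ` ?F \<subseteq> ?c ` (?F \<triangle> ?Y)"
    proof
      fix n assume "n \<in> ?c ` ?F"
      then obtain X where X: "X \<in> ?F" "n = ?c X" by auto
      show "n \<in> ?c ` (?F \<triangle> ?Y)"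
      proof (cases "X \<in> ?Y")
        case False then show ?thesis using X by (auto simp: symdiff_def)
      next
        case True
        then obtain G where G: "X = G \<union> {a, b}" "G \<in> ?F" "G \<subseteq> fst D - {a, b}" by auto
        have "G \<notin> ?Y" using G(3) by auto
        then have "G \<in> ?F \<triangle> ?Y" using G by (auto simp: symdiff_def)
        moreover have "n = ?c G" using X(2) G(1) cs[OF G(3)] by simp
        ultimately show ?thesis by (rule rev_image_eqI)
      qed
    qed
  qed
qed

lemma commute:
  assumes "a \<noteq> b"
  shows "handle_slide (handle_exchange D a b) a b = handle_exchange (handle_slide D a b) a b"
proof -
  let ?F = "snd D" let ?E = "fst D"
  let ?X = "{F \<union> {a, b} | F. F \<in> ?F \<and> F \<subseteq> ?E - {a, b}}"
  let ?Y = "{F \<union> {a} | F. F \<union> {b} \<in> ?F \<and> F \<subseteq> ?E - {a, b}}"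
  have 1: "{F \<union> {a} | F. F \<union> {b} \<in> ?F \<triangle> ?X \<and> F \<subseteq> ?E - {a, b}} = ?Y"
    using assms by (auto simp: symdiff_def)
  have 2: "{F \<union> {a, b} | F. F \<in> ?F \<triangle> ?Y \<and> F \<subseteq> ?E - {a, b}} = ?X"
    by (auto simp: symdiff_def)
  have 3: "(?F \<triangle> ?X) \<triangle> ?Y = (?F \<triangle> ?Y) \<triangle> ?X"
    by (auto simp: symdiff_def)
  show ?thesis unfolding handle_slide_def handle_exchange_def fst_conv snd_conv 1 2 3 ..
qed

theorem theorem3p7:
  fixes D :: "'a setsys" and a b :: 'a
  assumes "set_system D" and "proper D"
    and "a \<in> fst D" and "b \<in> fst D" and "a \<noteq> b"
  shows "twist_poly D + twist_poly (handle_slide (handle_exchange D a b) a b)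
           - twist_poly (handle_exchange D a b) - twist_poly (handle_slide D a b) = 0"
proof -
  let ?E = "fst D"
  let ?Dx = "handle_exchange D a b" let ?Ds = "handle_slide D a b"
  let ?D1 = "handle_slide (handle_exchange D a b) a b"
  have fin: "finite ?E" using assms(1) by (simp add: set_system_def)
  have fe: "fst ?Dx = ?E" "fst ?Ds = ?E" "fst ?D1 = ?E"
    by (simp_all add: handle_exchange_def handle_slide_def)
  have key: "monom (1::int) (width (twist D A)) + monom 1 (width (twist ?D1 A))
      - monom 1 (width (twist ?Dx A)) - monom 1 (width (twist ?Ds A)) = 0"
    if "A \<in> Pow ?E" for A
  proof -
    have fA: "finite A" using that fin finite_subset by blast
    show ?thesis
    proof (cases "(a \<in> A) = (b \<in> A)")
      case True
      have "width (twist ?Ds A) = width (twist D A)"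
        unfolding width_twist using img_slide[OF fin fA assms(5) True] by simp
      moreover have "width (twist ?D1 A) = width (twist ?Dx A)"
        unfolding width_twist using img_slide[of ?Dx A a b] fin fe fA assms(5) True by simp
      ultimately show ?thesis by simp
    next
      case False
      have "width (twist ?Dx A) = width (twist D A)"
        unfolding width_twist using img_exch[OF fin fA assms(5) False] by simp
      moreover have "width (twist ?D1 A) = width (twist ?Ds A)"
        unfolding width_twist commute[OF assms(5)]
        using img_exch[of ?Ds A a b] fin fe fA assms(5) False by simp
      ultimately show ?thesis by simp
    qed
  qed
  have "twist_poly D + twist_poly ?D1 - twist_poly ?Dx - twist_poly ?Ds
     = (\<Sum>A\<in>Pow ?E. monom (1::int) (width (twist D A)) + monom 1 (width (twist ?D1 A))
      - monom 1 (width (twist ?Dx A)) - monom 1 (width (twist ?Ds A)))"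
    unfolding twist_poly_def fe by (simp add: sum.distrib sum_subtractf)
  also have "\<dots> = 0" using key by (simp add: sum.neutral)
  finally show ?thesis .
qed

end
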